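(* Let $\lambda,R_c,H,\alpha_L>0$, $\alpha_N>2$, $m_L$ a positive integer and $\epsilon>0$. Let $\Phi$ be a homogeneous Poisson point process on $\mathbb{R}^2$ of intensity $\lambda$, $\Phi_o=\Phi\setminus\{y:\|y\|\le R_c\}$, $x_0=(r_0,0)$ with $0\le r_0\le R_c$, $r_1=\min_{y\in\Phi_o}\|y-x_0\|$ attained at $y_1$. Let $h_0=|g_0|^2(H^2+r_0^2)^{-\alpha_L/2}$ with $|g_0|^2\sim\mathrm{Gamma}(\text{shape }m_L,\text{rate }m_L)$, and for $y\in\Phi_o$ let $h_y=|g_y|^2\|y-x_0\|^{-\alpha_N}$ with i.i.d. $|g_y|^2\sim\mathrm{Exp}(1)$, all mutually independent and independent of $\Phi$. Let $h_1=h_{y_1}$, $I_2=\sum_{y\in\Phi_o\setminus\{y_1\}}h_y$, $\mathrm{SIR}_2=\frac{h_0+h_1}{I_2}$, $\mathcal{L}_{I_2|r_0,r_1}(s)=\mathbb{E}[e^{-sI_2}\mid r_1]$ and $\mathcal{L}^{(l)}_{I_2|r_0,r_1}$ its $l$-th derivative in $s$ ($\mathcal{L}^{(0)}=\mathcal{L}$). Put $\alpha_0=m_L$, $\beta_0=m_L(H^2+r_0^2)^{\alpha_L/2}$, $\alpha_1=1$, $\beta_1=r_1^{\alpha_N}$, $u_j=\beta_j\epsilon$, and $$A_{jk}=(-1)^{\alpha_j-k}\frac{\beta_0^{\alpha_0}\beta_1^{\alpha_1}(\alpha_{1-j}+\alpha_j-k-1)!}{(\alpha_j-k)!(\alpha_{1-j}-1)!}(\beta_{1-j}-\beta_j)^{-\alpha_{1-j}-\alpha_j+k}.$$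 Assume $r_1>R_c-r_0$ and $\beta_0\ne\beta_1$. Then $$P^2(r_0,r_1):=\Pr(\mathrm{SIR}_2>\epsilon\mid r_1)=\sum_{j=0}^{1}\sum_{k=1}^{\alpha_j}\frac{A_{jk}}{\beta_j^k}\sum_{l=0}^{k-1}\frac{(-u_j)^l}{l!}\mathcal{L}^{(l)}_{I_2|r_0,r_1}(u_j).$$
   Context: Here $\alpha_0,\alpha_1$ are the integers just defined (not path-loss exponents). A UAV at height $H$ above the center of the malfunction disc has a line-of-sight link to the user with Nakagami-$m_L$ fading and path-loss exponent $\alpha_L$; ground links are Rayleigh-faded with exponent $\alpha_N$. $\mathrm{SIR}_2$ is the signal-to-interference ratio when the user is cooperatively served by the UAV and its nearest ground base station. *)

theory Defs
  imports "HOL-Probability.Probability"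
begin

definition alph :: "nat \<Rightarrow> nat \<Rightarrow> nat" where
  "alph mL j = (if j = 0 then mL else 1)"

definition bet :: "real \<Rightarrow> real \<Rightarrow> nat \<Rightarrow> real" where
  "bet b0 b1 j = (if j = 0 then b0 else b1)"

definition coefA :: "nat \<Rightarrow> real \<Rightarrow> real \<Rightarrow> nat \<Rightarrow> nat \<Rightarrow> real" where
  "coefA mL b0 b1 j k =
     (-1) ^ (alph mL j - k) *
     (b0 ^ alph mL 0 * b1 ^ alph mL 1 * fact (alph mL (1 - j) + alph mL j - k - 1)
        / (fact (alph mL j - k) * fact (alph mL (1 - j) - 1)))
     * (bet b0 b1 (1 - j) - bet b0 b1 j)
         powi (- int (alph mL (1 - j)) - int (alph mL j) + int k)"

definition laplace_tr :: "'a measure \<Rightarrow> ('a \<Rightarrow> real) \<Rightarrow> real \<Rightarrow> real" where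
  "laplace_tr M X s = (\<integral>\<omega>. exp (- s * X \<omega>) \<partial>M)"

end

theory Submission
  imports Defs
begin


lemma exp_diff_bound: "\<bar>exp a - exp b\<bar> \<le> \<bar>a - b\<bar> * exp (max a b)" for a b :: real
proof -
  have *: "exp y - exp x \<le> (y - x) * exp y" if "x \<le> y" for x y :: real
  proof -
    have "1 + (x - y) \<le> exp (x - y)" by (rule exp_ge_add_one_self)
    hence "exp y * (1 + (x - y)) \<le> exp y * exp (x - y)" by (intro mult_left_mono) auto
    hence "exp y * (1 + (x - y)) \<le> exp x" by (simp add: exp_diff)
    thus ?thesis by (simp add: algebra_simps)
  qed
  show ?thesis
  proof (cases "a \<le> b")
    case True
    with *[OF True] show ?thesis by (simp add: max_def abs_if algebra_simps)
  next
    case False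
    with *[of b a] show ?thesis by (simp add: max_def abs_if algebra_simps)
  qed
qed

lemma pow_exp_bound:
  fixes x c :: real
  assumes "0 \<le> x" "0 < c"
  shows "x ^ n * exp (- c * x) \<le> fact n / c ^ n"
proof -
  have "(c*x)^n / fact n \<le> (\<Sum>k\<le>n. (c*x)^k / fact k)"
    by (rule member_le_sum) (use assms in auto)
  also have "\<dots> \<le> exp (c * x)"
    using assms summable_exp_generic[of "c * x"]
    by (auto simp: exp_def divide_inverse ac_simps intro!: sum_le_suminf)
  finally have h: "(c*x)^n / fact n \<le> exp (c * x)" .
  hence h2: "c ^ n * x ^ n \<le> fact n * exp (c * x)"
    by (simp add: divide_le_eq power_mult_distrib mult.commute)
  have "x ^ n * exp (- c * x) = (c ^ n * x ^ n) / exp (c*x) / c ^ n"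
    using assms by (simp add: exp_minus field_simps)
  also have "\<dots> \<le> (fact n * exp (c * x)) / exp (c*x) / c ^ n"
    using h2 assms by (intro divide_right_mono) auto
  finally show ?thesis by simp
qed

lemma laplace_integrable:
  fixes I :: "'a \<Rightarrow> real" and t :: real
  assumes "prob_space M" "I \<in> borel_measurable M" "AE \<omega> in M. 0 < I \<omega>" "0 < t"
  shows "integrable M (\<lambda>\<omega>. (- I \<omega>) ^ k * exp (- t * I \<omega>))"
proof -
  interpret prob_space M by fact
  show ?thesis
  proof (rule integrable_const_bound[where B="fact k / t ^ k"])
    show "AE \<omega> in M. norm ((- I \<omega>) ^ k * exp (- t * I \<omega>)) \<le> fact k / t ^ k"
      using assms(3)
    proof eventually_elim
      case (elim \<omega>)
      have "norm ((- I \<omega>) ^ k * exp (- t * I \<omega>)) = I \<omega> ^ k * exp (- t * I \<omega>)"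
        using elim by (simp add: abs_mult power_abs)
      also have "\<dots> \<le> fact k / t ^ k" using elim assms(4) by (intro pow_exp_bound) auto
      finally show ?case .
    qed
  qed (use assms(2) in measurable)
qed

lemma laplace_has_deriv:
  fixes I :: "'a \<Rightarrow> real" and s :: real
  assumes M: "prob_space M" and Im: "I \<in> borel_measurable M" and Ipos: "AE \<omega> in M. 0 < I \<omega>" and s: "0 < s"
  shows "((\<lambda>t. \<integral>\<omega>. (- I \<omega>) ^ l * exp (- t * I \<omega>) \<partial>M) has_field_derivative
           (\<integral>\<omega>. (- I \<omega>) ^ Suc l * exp (- s * I \<omega>) \<partial>M)) (at s)"
proof -
  interpret prob_space M by fact
  define F where "F = (\<lambda>t. \<integral>\<omega>. (- I \<omega>) ^ l * exp (- t * I \<omega>) \<partial>M)"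
  have intg: "\<And>t k. 0 < t \<Longrightarrow> integrable M (\<lambda>\<omega>. (- I \<omega>) ^ k * exp (- t * I \<omega>))"
    using laplace_integrable[OF M Im Ipos] by blast
  have "((\<lambda>h. (F (s + h) - F s) / h) \<longlongrightarrow> (\<integral>\<omega>. (- I \<omega>) ^ Suc l * exp (- s * I \<omega>) \<partial>M)) (at 0)"
    unfolding tendsto_at_iff_sequentially comp_def
  proof (intro allI impI)
    fix X :: "nat \<Rightarrow> real"
    assume X0: "\<forall>i. X i \<in> UNIV - {0}" and Xlim: "X \<longlonglongrightarrow> 0"
    have "\<forall>\<^sub>F n in sequentially. dist (X n) 0 < s / 2"
      using Xlim s by (intro tendstoD) auto
    then obtain N where N: "\<And>n. N \<le> n \<Longrightarrow> \<bar>X n\<bar> < s / 2"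
      by (auto simp: eventually_sequentially dist_norm)
    define Y where "Y n = X (n + N)" for n
    have Y: "\<bar>Y n\<bar> < s / 2" "Y n \<noteq> 0" for n
      using N X0 by (auto simp: Y_def)
    have Ylim: "Y \<longlonglongrightarrow> 0"
      unfolding Y_def using Xlim by (rule LIMSEQ_ignore_initial_segment)
    define q where "q n \<omega> = (- I \<omega>) ^ l * (exp (- (s + Y n) * I \<omega>) - exp (- s * I \<omega>)) / Y n" for n \<omega>
    have Fq: "(F (s + Y n) - F s) / Y n = (\<integral>\<omega>. q n \<omega> \<partial>M)" for n
    proof -
      have pos: "0 < s + Y n" using Y[of n] by auto
      have "F (s + Y n) - F s = (\<integral>\<omega>. (- I \<omega>) ^ l * exp (- (s + Y n) * I \<omega>) - (- I \<omega>) ^ l * exp (- s * I \<omega>) \<partial>M)"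
        unfolding F_def using intg[OF pos] intg[OF s] by (simp add: Bochner_Integration.integral_diff)
      also have "\<dots> / Y n = (\<integral>\<omega>. q n \<omega> \<partial>M)"
        unfolding q_def by (simp add: algebra_simps)
      finally show ?thesis .
    qed
    have "(\<lambda>n. \<integral>\<omega>. q n \<omega> \<partial>M) \<longlonglongrightarrow> (\<integral>\<omega>. (- I \<omega>) ^ Suc l * exp (- s * I \<omega>) \<partial>M)"
    proof (rule integral_dominated_convergence[where w="\<lambda>_. fact (Suc l) / (s/2) ^ Suc l"])
      show "(\<lambda>\<omega>. (- I \<omega>) ^ Suc l * exp (- s * I \<omega>)) \<in> borel_measurable M" using Im by measurable
      show "\<And>n. q n \<in> borel_measurable M" unfolding q_def using Im by measurable
      show "integrable M (\<lambda>_. fact (Suc l) / (s/2) ^ Suc l)" by simp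
      show "AE \<omega> in M. (\<lambda>n. q n \<omega>) \<longlonglongrightarrow> (- I \<omega>) ^ Suc l * exp (- s * I \<omega>)"
      proof (rule AE_I2)
        fix \<omega>
        have "((\<lambda>t. exp (- t * I \<omega>)) has_field_derivative (- I \<omega> * exp (- s * I \<omega>))) (at s)"
          by (auto intro!: derivative_eq_intros)
        hence "((\<lambda>h. (exp (- (s + h) * I \<omega>) - exp (- s * I \<omega>)) / h) \<longlongrightarrow> (- I \<omega> * exp (- s * I \<omega>))) (at 0)"
          unfolding DERIV_def by simp
        hence "(\<lambda>n. (exp (- (s + Y n) * I \<omega>) - exp (- s * I \<omega>)) / Y n) \<longlonglongrightarrow> (- I \<omega> * exp (- s * I \<omega>))"
          unfolding tendsto_at_iff_sequentially comp_def using Y(2) Ylim by auto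
        hence "(\<lambda>n. (- I \<omega>) ^ l * ((exp (- (s + Y n) * I \<omega>) - exp (- s * I \<omega>)) / Y n)) \<longlonglongrightarrow> (- I \<omega>) ^ l * (- I \<omega> * exp (- s * I \<omega>))"
          by (rule tendsto_mult_left)
        thus "(\<lambda>n. q n \<omega>) \<longlonglongrightarrow> (- I \<omega>) ^ Suc l * exp (- s * I \<omega>)"
          unfolding q_def by (simp add: mult.assoc mult.left_commute)
      qed
      show "AE \<omega> in M. norm (q n \<omega>) \<le> fact (Suc l) / (s/2) ^ Suc l" for n
        using Ipos
      proof eventually_elim
        case (elim \<omega>)
        let ?x = "I \<omega>"
        have "\<bar>exp (- (s + Y n) * ?x) - exp (- s * ?x)\<bar> \<le> \<bar>(- (s + Y n) * ?x) - (- s * ?x)\<bar> * exp (max (- (s + Y n) * ?x) (- s * ?x))"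
          by (rule exp_diff_bound)
        also have "\<dots> \<le> (\<bar>Y n\<bar> * ?x) * exp (- (s/2) * ?x)"
        proof (intro mult_mono)
          show "\<bar>(- (s + Y n) * ?x) - (- s * ?x)\<bar> \<le> \<bar>Y n\<bar> * ?x"
            using elim by (simp add: abs_mult algebra_simps)
          have yb: "- (s/2) \<le> Y n" using Y(1)[of n] by auto
          have "(- (s/2)) * ?x \<le> Y n * ?x" using yb elim by (intro mult_right_mono) auto
          hence "max (- (s + Y n) * ?x) (- s * ?x) \<le> - (s/2) * ?x"
            using elim s by (auto simp: max_def algebra_simps)
          thus "exp (max (- (s + Y n) * ?x) (- s * ?x)) \<le> exp (- (s/2) * ?x)" by simp
        qed (use elim in auto)
        finally have d: "\<bar>exp (- (s + Y n) * ?x) - exp (- s * ?x)\<bar> \<le> (\<bar>Y n\<bar> * ?x) * exp (- (s/2) * ?x)" .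
        have "norm (q n \<omega>) = ?x ^ l * \<bar>exp (- (s + Y n) * ?x) - exp (- s * ?x)\<bar> / \<bar>Y n\<bar>"
          unfolding q_def using elim by (simp add: abs_mult power_abs)
        also have "\<dots> \<le> ?x ^ l * ((\<bar>Y n\<bar> * ?x) * exp (- (s/2) * ?x)) / \<bar>Y n\<bar>"
          using d elim by (intro divide_right_mono mult_left_mono) auto
        also have "\<dots> = ?x ^ Suc l * exp (- (s/2) * ?x)"
          using Y(2)[of n] by (simp add: field_simps)
        also have "\<dots> \<le> fact (Suc l) / (s/2) ^ Suc l"
          using elim s by (intro pow_exp_bound) auto
        finally show ?case .
      qed
    qed
    hence "(\<lambda>n. (F (s + Y n) - F s) / Y n) \<longlonglongrightarrow> (\<integral>\<omega>. (- I \<omega>) ^ Suc l * exp (- s * I \<omega>) \<partial>M)"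
      by (simp add: Fq)
    thus "(\<lambda>n. (F (s + X n) - F s) / X n) \<longlonglongrightarrow> (\<integral>\<omega>. (- I \<omega>) ^ Suc l * exp (- s * I \<omega>) \<partial>M)"
      unfolding Y_def by (rule LIMSEQ_offset)
  qed
  thus ?thesis unfolding DERIV_def F_def .
qed

lemma laplace_deriv:
  fixes I :: "'a \<Rightarrow> real"
  assumes M: "prob_space M" and Im: "I \<in> borel_measurable M" and Ipos: "AE \<omega> in M. 0 < I \<omega>"
  shows "0 < s \<Longrightarrow> (deriv ^^ l) (laplace_tr M I) s = (\<integral>\<omega>. (- I \<omega>) ^ l * exp (- s * I \<omega>) \<partial>M)"
proof (induction l arbitrary: s)
  case 0
  then show ?case by (simp add: laplace_tr_def)
next
  case (Suc l)
  have "((deriv ^^ l) (laplace_tr M I) has_field_derivative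
           (\<integral>\<omega>. (- I \<omega>) ^ Suc l * exp (- s * I \<omega>) \<partial>M)) (at s)"
    by (rule has_field_derivative_transform_within_open[OF laplace_has_deriv[OF M Im Ipos Suc.prems, of l], where S="{0<..}"])
       (use Suc in auto)
  then show ?case by (simp add: DERIV_imp_deriv)
qed



definition esum :: "nat \<Rightarrow> real \<Rightarrow> real" where
  "esum m z = (\<Sum>n<m. z ^ n / fact n)"

lemma esum_Suc: "esum (Suc m) z = esum m z + z ^ m / fact m"
  by (simp add: esum_def)

lemma poly_id:
  fixes b0 b1 d x t :: real
  assumes d: "d \<noteq> 0" and b1: "b1 = b0 - d" and x: "x = b0 * t"
  shows "esum m x - (b0/d)^m * esum m (d*t) = - (\<Sum>k\<in>{1..m}. b1 * b0^(m-k) / d^(Suc (m-k)) * esum k x)"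
proof (induction m)
  case 0
  then show ?case by (simp add: esum_def)
next
  case (Suc m)
  have S: "(\<Sum>k\<in>{1..Suc m}. b1 * b0^(Suc m-k) / d^(Suc (Suc m-k)) * esum k x)
      = (b0/d) * (\<Sum>k\<in>{1..m}. b1 * b0^(m-k) / d^(Suc (m-k)) * esum k x) + b1 / d * esum (Suc m) x"
  proof -
    have "(\<Sum>k\<in>{1..Suc m}. b1 * b0^(Suc m-k) / d^(Suc (Suc m-k)) * esum k x)
        = (\<Sum>k\<in>{1..m}. b1 * b0^(Suc m-k) / d^(Suc (Suc m-k)) * esum k x) + b1 / d * esum (Suc m) x"
      by (simp add: sum.atLeast_Suc_atMost_Suc_shift del: sum.op_ivl_Suc)
    also have "(\<Sum>k\<in>{1..m}. b1 * b0^(Suc m-k) / d^(Suc (Suc m-k)) * esum k x)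
        = (b0/d) * (\<Sum>k\<in>{1..m}. b1 * b0^(m-k) / d^(Suc (m-k)) * esum k x)"
      unfolding sum_distrib_left
      by (intro sum.cong refl) (auto simp: Suc_diff_le field_simps)
    finally show ?thesis .
  qed
  define A where "A = (b0/d)^m * esum m (d*t)"
  define SS where "SS = (\<Sum>k\<in>{1..m}. b1 * b0^(m-k) / d^(Suc (m-k)) * esum k x)"
  define r where "r = b0 / d"
  have h0: "(b0/d)^Suc m * (d*t)^m / fact m = (b0/d) * (x ^ m / fact m)"
    using d by (simp add: x power_mult_distrib field_simps)
  have h1: "(b0/d)^Suc m * esum (Suc m) (d*t) = r * A + r * (x^m / fact m)"
    unfolding A_def r_def esum_Suc using h0 by (simp add: algebra_simps)
  have h2: "A = esum m x + SS" unfolding A_def SS_def using Suc.IH by simp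
  have h3: "esum (Suc m) x = esum m x + x^m/fact m" by (rule esum_Suc)
  have h4: "1 - r = - (b1/d)" using d by (simp add: r_def b1 field_simps)
  have "esum (Suc m) x - (b0/d)^Suc m * esum (Suc m) (d*t) = (1 - r) * esum (Suc m) x - r * SS"
    unfolding h1 h2 h3 by (simp add: field_simps)
  also have "\<dots> = - (r * SS + b1 / d * esum (Suc m) x)" unfolding h4 by (simp add: algebra_simps)
  finally show ?case using S by (simp add: SS_def r_def)
qed

lemma coefA1: "0 < m \<Longrightarrow> coefA m b0 b1 1 1 = b0^m * b1 / (b0-b1)^m"
  by (simp add: coefA_def alph_def bet_def power_int_minus divide_simps)

lemma aux_pow:
  fixes a :: real assumes a: "a \<noteq> 0"
  shows "(-1)^n * ((-a) powi (- int (Suc n))) = - (1 / a^Suc n)"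
proof -
  have p: "(-a) powi (- int (Suc n)) = 1 / (-a)^Suc n"
    by (simp only: power_int_minus_divide power_int_of_nat)
  have q: "1 / (-a)^Suc n = (-1)^Suc n * (1 / a^Suc n)"
  proof -
    have "1 / (-a)^Suc n = (1 / (-a))^Suc n" by (rule power_one_over[symmetric])
    also have "1 / (-a) = - (1 / a)" by simp
    also have "(- (1 / a))^Suc n = (-1)^Suc n * (1/a)^Suc n" by (rule power_minus)
    also have "(1/a)^Suc n = 1 / a^Suc n" by (rule power_one_over)
    finally show ?thesis .
  qed
  have r: "(-1::real)^n * (-1)^n = 1" by (metis power2_eq_square neg_one_even_power even_mult_iff even_numeral power_mult)
  have "(-1)^n * ((-a) powi (- int (Suc n))) = - (((-1)^n * (-1)^n) * (1 / a^Suc n))"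
    unfolding p q power_Suc[of "-1::real"] by (simp add: algebra_simps)
  also have "\<dots> = - (1 / a^Suc n)" unfolding r by simp
  finally show ?thesis .
qed
lemma coefA0:
  assumes "1 \<le> k" "k \<le> m" "b0 \<noteq> b1"
  shows "coefA m b0 b1 0 k = - (b0^m * b1 / (b0 - b1)^(Suc (m-k)))"
proof -
  have g: "(-1) ^ (m - k) * (-(b0 - b1)) powi (- int (Suc (m - k))) = - (1 / (b0 - b1) ^ Suc (m - k))"
    using assms by (intro aux_pow) simp
  have a0: "alph m 0 = m" "alph m (1-0) = 1" "bet b0 b1 (1-0) = b1" "bet b0 b1 0 = b0" "alph m 1 = 1"
    by (simp_all add: alph_def bet_def)
  have e: "- int 1 - int m + int k = - int (Suc (m - k))" using assms by simp
  have f: "1 + m - k - 1 = m - k" using assms by simp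
  have h: "b1 - b0 = -(b0 - b1)" by simp
  have "coefA m b0 b1 0 k = (-1) ^ (m - k) * (b0 ^ m * b1 ^ 1 * fact (m - k) / (fact (m - k) * fact (1 - 1)))
      * (-(b0 - b1)) powi (- int (Suc (m - k)))"
    unfolding coefA_def a0 e f h ..
  also have "\<dots> = (b0 ^ m * b1) * ((-1) ^ (m - k) * (-(b0 - b1)) powi (- int (Suc (m - k))))"
  proof -
    have "b0 ^ m * b1 ^ 1 * fact (m - k) / (fact (m - k) * fact (1 - 1)) = (b0^m * b1 :: real)" by simp
    then show ?thesis by (simp only: ac_simps)
  qed
  finally show ?thesis unfolding g by simp
qed

definition Fc :: "nat \<Rightarrow> real \<Rightarrow> real \<Rightarrow> real \<Rightarrow> real" where
  "Fc m b0 b1 t = esum m (b0*t) * exp (- b0*t) + (b0/(b0-b1))^m * exp (- b1*t)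
     - (b0/(b0-b1))^m * exp (- b0*t) * esum m ((b0-b1)*t)"

lemma closed_form:
  fixes b0 b1 e x :: real
  assumes m: "0 < m" and ne: "b0 \<noteq> b1" and b0: "b0 \<noteq> 0" and b1: "b1 \<noteq> 0"
  shows "Fc m b0 b1 (e*x) = (\<Sum>j\<in>{0::nat,1}. \<Sum>k=1..alph m j.
            coefA m b0 b1 j k / bet b0 b1 j ^ k *
            (\<Sum>l<k. (- (bet b0 b1 j * e)) ^ l / fact l * ((- x) ^ l * exp (- (bet b0 b1 j * e) * x))))"
proof -
  define t where "t = e * x"
  define d where "d = b0 - b1"
  have d0: "d \<noteq> 0" using ne by (simp add: d_def)
  have inner: "(\<Sum>l<k. (- (c * e)) ^ l / fact l * ((- x) ^ l * exp (- (c * e) * x))) = esum k (c * t) * exp (- c * t)" for c k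
    unfolding esum_def t_def sum_distrib_right
  proof (intro sum.cong refl)
    fix l
    have "(- (c * e)) ^ l * (- x) ^ l = (c * (e * x)) ^ l"
      by (simp add: power_mult_distrib[symmetric] mult.assoc)
    then show "(- (c * e)) ^ l / fact l * ((- x) ^ l * exp (- (c * e) * x)) = (c * (e * x)) ^ l / fact l * exp (- c * (e * x))"
      by (simp add: field_simps)
  qed
  have j1: "(\<Sum>k=1..alph m 1. coefA m b0 b1 1 k / bet b0 b1 1 ^ k * esum k (bet b0 b1 1 * t) * exp (- bet b0 b1 1 * t))
      = (b0/d)^m * exp (- b1 * t)"
    using m b1 coefA1[OF m, of b0 b1] by (simp add: alph_def bet_def esum_def d_def power_divide)
  have j0: "(\<Sum>k=1..alph m 0. coefA m b0 b1 0 k / bet b0 b1 0 ^ k * esum k (bet b0 b1 0 * t) * exp (- bet b0 b1 0 * t))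
      = - exp (- b0 * t) * (\<Sum>k\<in>{1..m}. b1 * b0^(m-k) / d^(Suc (m-k)) * esum k (b0 * t))"
    unfolding sum_distrib_left alph_def bet_def
  proof (simp only: if_True simp_thms, intro sum.cong refl)
    fix k assume k: "k \<in> {1..m}"
    have "b0 ^ m = b0 ^ (m - k) * b0 ^ k" using k by (simp add: power_add[symmetric])
    then show "coefA m b0 b1 0 k / b0 ^ k * esum k (b0 * t) * exp (- b0 * t) =
        - exp (- b0 * t) * (b1 * b0 ^ (m - k) / d ^ Suc (m - k) * esum k (b0 * t))"
      using k ne b0 by (simp add: coefA0 d_def field_simps)
  qed
  have "(\<Sum>j\<in>{0::nat,1}. \<Sum>k=1..alph m j.
            coefA m b0 b1 j k / bet b0 b1 j ^ k *
            (\<Sum>l<k. (- (bet b0 b1 j * e)) ^ l / fact l * ((- x) ^ l * exp (- (bet b0 b1 j * e) * x))))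
      = (\<Sum>k=1..alph m 0. coefA m b0 b1 0 k / bet b0 b1 0 ^ k * esum k (bet b0 b1 0 * t) * exp (- bet b0 b1 0 * t))
        + (\<Sum>k=1..alph m 1. coefA m b0 b1 1 k / bet b0 b1 1 ^ k * esum k (bet b0 b1 1 * t) * exp (- bet b0 b1 1 * t))"
    unfolding inner by (simp add: mult.assoc)
  also have "\<dots> = exp (- b0 * t) * (esum m (b0*t) - (b0/d)^m * esum m (d*t)) + (b0/d)^m * exp (- b1 * t)"
  proof -
    have P: "esum m (b0*t) - (b0/d)^m * esum m (d*t) = - (\<Sum>k\<in>{1..m}. b1 * b0^(m-k) / d^(Suc (m-k)) * esum k (b0*t))"
      by (rule poly_id[OF d0]) (simp_all add: d_def)
    show ?thesis unfolding j0 j1 P by simp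
  qed
  also have "\<dots> = Fc m b0 b1 t" unfolding Fc_def d_def by (simp add: algebra_simps)
  finally show ?thesis unfolding t_def ..
qed

lemma esum_deriv: "((\<lambda>z. exp (- z) * esum (Suc n) z) has_real_derivative (- exp (- z) * z ^ n / fact n)) (at z)"
proof (induction n)
  case 0
  show ?case by (simp add: esum_def) (auto intro!: derivative_eq_intros)
next
  case (Suc n)
  have eq: "(\<lambda>z. exp (- z) * esum (Suc (Suc n)) z) = (\<lambda>z. exp (- z) * esum (Suc n) z + exp (- z) * (z ^ Suc n / fact (Suc n)))"
    by (rule ext) (simp add: esum_Suc[of "Suc n"] algebra_simps)
  have e1: "((\<lambda>z. exp (- z)) has_real_derivative (- exp (- z))) (at z)"
    by (auto intro!: derivative_eq_intros)
  have p1: "((\<lambda>z. z ^ Suc n) has_real_derivative (real (Suc n) * z ^ n)) (at z)"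
    using DERIV_pow[of "Suc n" z] by simp
  have p2: "((\<lambda>z. z ^ Suc n / fact (Suc n)) has_real_derivative (z ^ n / fact n)) (at z)"
    using DERIV_cdivide[OF p1, of "fact (Suc n)"] by (simp add: fact_Suc del: of_nat_Suc)
  have d2: "((\<lambda>z. exp (- z) * (z ^ Suc n / fact (Suc n))) has_real_derivative
      (- exp (- z) * (z ^ Suc n / fact (Suc n)) + exp (- z) * (z ^ n / fact n))) (at z)"
    by (rule DERIV_mult[OF e1 p2, THEN DERIV_cong]) (simp add: algebra_simps)
  show ?case unfolding eq
    by (rule DERIV_add[OF Suc.IH d2, THEN DERIV_cong]) (simp add: algebra_simps)
qed



lemma esum_0: assumes "0 < m" shows "esum m 0 = 1"
proof -
  have "esum m 0 = (\<Sum>n<m. if n = 0 then 1 else 0)"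
    unfolding esum_def by (intro sum.cong) (auto simp: zero_power)
  also have "\<dots> = 1" using assms by (simp add: sum.delta)
  finally show ?thesis .
qed

lemma (in prob_space) F_formula:
  fixes G0 G1 :: "'a \<Rightarrow> real" and b0 b1 t :: real and m :: nat
  assumes D0: "distributed M lborel G0 (\<lambda>x. ennreal (erlang_density (m - 1) (real m) x))"
    and D1: "distributed M lborel G1 (\<lambda>x. ennreal (exponential_density 1 x))"
    and ind: "indep_var borel G0 borel G1"
    and m: "0 < m" and b0: "0 < b0" and b1: "0 < b1" and ne: "b0 \<noteq> b1" and t: "0 < t"
  shows "emeasure (distr M (borel \<Otimes>\<^sub>M borel) (\<lambda>\<omega>. (G0 \<omega>, G1 \<omega>)))
            {p. t < (m / b0) * fst p + (1 / b1) * snd p} = ennreal (Fc m b0 b1 t) \<and> 0 \<le> Fc m b0 b1 t"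
proof -
  define c0 where "c0 = m / b0"
  define c1 where "c1 = 1 / b1"
  have c0: "0 < c0" and c1: "0 < c1" using m b0 b1 by (auto simp: c0_def c1_def)
  have [measurable]: "G0 \<in> measurable M lborel" "G1 \<in> measurable M lborel"
    using D0 D1 by (auto dest: distributed_measurable)
  then have [measurable]: "G0 \<in> borel_measurable M" "G1 \<in> borel_measurable M"
    using measurable_cong_sets[OF refl sets_lborel] by auto
  define D0m where "D0m = distr M lborel G0"
  define D1m where "D1m = distr M lborel G1"
  interpret D1: prob_space D1m unfolding D1m_def by (rule prob_space_distr) measurable
  have "distr M borel G0 = D0m" "distr M borel G1 = D1m"
    unfolding D0m_def D1m_def by (auto intro!: distr_cong)
  then have prod: "distr M (borel \<Otimes>\<^sub>M borel) (\<lambda>\<omega>. (G0 \<omega>, G1 \<omega>)) = D0m \<Otimes>\<^sub>M D1m"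
    using ind unfolding indep_var_distribution_eq by simp
  define A where "A = {p::real\<times>real. t < c0 * fst p + c1 * snd p}"
  have A: "A \<in> sets (D0m \<Otimes>\<^sub>M D1m)"
  proof -
    have "sets (D0m \<Otimes>\<^sub>M D1m) = sets (borel \<Otimes>\<^sub>M borel)"
      unfolding D0m_def D1m_def by (intro sets_pair_measure_cong) auto
    moreover have "A = {p \<in> space (borel \<Otimes>\<^sub>M (borel :: real measure)). t < c0 * fst p + c1 * snd p}"
      by (auto simp: A_def space_pair_measure)
    moreover have "{p \<in> space (borel \<Otimes>\<^sub>M (borel :: real measure)). t < c0 * fst p + c1 * snd p} \<in> sets (borel \<Otimes>\<^sub>M borel)"
      by measurable
    ultimately show ?thesis by simp
  qed
  define h where "h x = (if c0 * x \<le> t then exp (- ((t - c0 * x) / c1)) else 1)" for x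
  have inner: "emeasure D1m (Pair x -` A) = ennreal (h x)" for x
  proof -
    define a where "a = (t - c0 * x) / c1"
    have "Pair x -` A = {y. a < y}"
      using c1 by (auto simp: A_def a_def field_simps)
    hence "emeasure D1m (Pair x -` A) = emeasure M {\<omega> \<in> space M. a < G1 \<omega>}"
      unfolding D1m_def by (subst emeasure_distr) (auto intro!: arg_cong[where f="emeasure M"])
    also have "\<dots> = ennreal (prob {\<omega> \<in> space M. a < G1 \<omega>})"
      by (simp add: emeasure_eq_measure)
    also have "prob {\<omega> \<in> space M. a < G1 \<omega>} = h x"
    proof (cases "0 \<le> a")
      case True
      then have "c0 * x \<le> t" using c1 by (simp add: a_def field_simps)
      then show ?thesis using exponential_distributedD_gt[OF D1 True] True
        by (simp add: h_def a_def)
    next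
      case False
      then have nh: "\<not> c0 * x \<le> t" using c1 by (simp add: a_def field_simps)
      have "prob {\<omega> \<in> space M. G1 \<omega> \<le> a} \<le> prob {\<omega> \<in> space M. G1 \<omega> \<le> 0}"
        using False by (intro finite_measure_mono) auto
      also have "\<dots> = 0" using exponential_distributedD_le[OF D1, of 0] by simp
      finally have z: "prob {\<omega> \<in> space M. G1 \<omega> \<le> a} = 0" by (simp add: measure_le_0_iff)
      have "prob {\<omega> \<in> space M. a < G1 \<omega>} = prob (space M - {\<omega> \<in> space M. G1 \<omega> \<le> a})"
        by (intro arg_cong[where f=prob]) auto
      also have "\<dots> = 1" using z by (subst prob_compl) auto
      finally show ?thesis using nh by (simp add: h_def)
    qed
    finally show ?thesis .
  qed
  have "emeasure (D0m \<Otimes>\<^sub>M D1m) A = (\<integral>\<^sup>+x. emeasure D1m (Pair x -` A) \<partial>D0m)"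
    by (rule D1.emeasure_pair_measure_alt[OF A])
  also have "\<dots> = (\<integral>\<^sup>+x. ennreal (h x) \<partial>D0m)" by (simp add: inner)
  also have "\<dots> = (\<integral>\<^sup>+x. ennreal (erlang_density (m - 1) (real m) x) * ennreal (h x) \<partial>lborel)"
    unfolding D0m_def distributed_distr_eq_density[OF D0]
    by (subst nn_integral_density) (auto simp: h_def)
  also have "\<dots> = (\<integral>\<^sup>+x. ennreal (erlang_density (m - 1) (real m) x) * indicator {t/c0<..} x
      + ennreal (erlang_density (m - 1) (real m) x * exp (- ((t - c0 * x) / c1))) * indicator {0..t/c0} x \<partial>lborel)"
  proof (intro nn_integral_cong)
    fix x :: real
    show "ennreal (erlang_density (m - 1) (real m) x) * ennreal (h x) =
      ennreal (erlang_density (m - 1) (real m) x) * indicator {t/c0<..} x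
      + ennreal (erlang_density (m - 1) (real m) x * exp (- ((t - c0 * x) / c1))) * indicator {0..t/c0} x"
    proof (cases "x < 0")
      case True
      then show ?thesis using c0 t by (simp add: erlang_density_def indicator_def)
    next
      case False
      then show ?thesis using c0 t
        by (auto simp: h_def indicator_def field_simps ennreal_mult[symmetric] not_less)
    qed
  qed
  also have "\<dots> = (\<integral>\<^sup>+x. ennreal (erlang_density (m - 1) (real m) x) * indicator {t/c0<..} x \<partial>lborel)
      + (\<integral>\<^sup>+x. ennreal (erlang_density (m - 1) (real m) x * exp (- ((t - c0 * x) / c1))) * indicator {0..t/c0} x \<partial>lborel)"
    by (rule nn_integral_add) auto
  also have "(\<integral>\<^sup>+x. ennreal (erlang_density (m - 1) (real m) x) * indicator {t/c0<..} x \<partial>lborel)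
      = ennreal (prob {\<omega> \<in> space M. t/c0 < G0 \<omega>})"
  proof -
    have "(\<integral>\<^sup>+x. ennreal (erlang_density (m - 1) (real m) x) * indicator {t/c0<..} x \<partial>lborel)
        = emeasure M (G0 -` {t/c0<..} \<inter> space M)"
      by (rule distributed_emeasure[OF D0, symmetric]) auto
    also have "G0 -` {t/c0<..} \<inter> space M = {\<omega> \<in> space M. t/c0 < G0 \<omega>}" by auto
    finally show ?thesis by (simp add: emeasure_eq_measure)
  qed
  also have "prob {\<omega> \<in> space M. t/c0 < G0 \<omega>} = esum m (b0*t) * exp (- b0*t)"
  proof -
    have p1: "prob {\<omega> \<in> space M. t/c0 < G0 \<omega>} = 1 - erlang_CDF (m - 1) (real m) (t/c0)"
      using c0 t m by (intro erlang_distributed_gt[OF D0]) auto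
    have e: "real m * (t / c0) = b0 * t" using m by (simp add: c0_def)
    have e2: "- real m * (t / c0) = - (b0 * t)" using e by (simp only: mult_minus_left)
    have nn: "\<not> (t/c0 < 0)" using c0 t by (simp add: not_less)
    have "1 - erlang_CDF (m - 1) (real m) (t/c0) = (\<Sum>n\<le>m-1. (b0*t)^n * exp (- (b0*t)) / fact n)"
      unfolding erlang_CDF_def if_not_P[OF nn] e e2 by simp
    also have "\<dots> = (\<Sum>n<m. (b0*t)^n * exp (- (b0*t)) / fact n)"
      using m by (intro sum.cong) auto
    also have "\<dots> = esum m (b0*t) * exp (- b0*t)"
      unfolding esum_def sum_distrib_right by (intro sum.cong) auto
    finally show ?thesis using p1 by simp
  qed
  finally have chain: "emeasure (D0m \<Otimes>\<^sub>M D1m) A = ennreal (esum m (b0*t) * exp (- b0*t)) +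
      (\<integral>\<^sup>+x. ennreal (erlang_density (m - 1) (real m) x * exp (- ((t - c0 * x) / c1))) * indicator {0..t/c0} x \<partial>lborel)" .
  obtain n where mn: "m = Suc n" using m by (cases m) auto
  define \<delta> where "\<delta> = real m - c0 / c1"
  have \<delta>_eq: "\<delta> = c0 * (b0 - b1)" using b0 by (simp add: \<delta>_def c0_def c1_def field_simps)
  have \<delta>0: "\<delta> \<noteq> 0" using c0 ne by (simp add: \<delta>_eq)
  define K where "K = - exp (- (t/c1)) * (real m / \<delta>) ^ m"
  define \<Phi> where "\<Phi> x = K * (exp (- (\<delta>*x)) * esum m (\<delta>*x))" for x
  have deriv\<Phi>: "(\<Phi> has_real_derivative (erlang_density (m - 1) (real m) x * exp (- ((t - c0 * x) / c1)))) (at x)"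
    if x: "0 \<le> x" for x
  proof -
    have dg: "((\<lambda>x. \<delta> * x) has_real_derivative \<delta>) (at x)" by (auto intro!: derivative_eq_intros)
    have d1: "((\<lambda>x. exp (- (\<delta>*x)) * esum (Suc n) (\<delta>*x)) has_real_derivative
        (- exp (- (\<delta>*x)) * (\<delta>*x) ^ n / fact n) * \<delta>) (at x)"
      using DERIV_chain2[OF esum_deriv[of n "\<delta>*x"] dg] by simp
    have d2: "(\<Phi> has_real_derivative K * ((- exp (- (\<delta>*x)) * (\<delta>*x) ^ n / fact n) * \<delta>)) (at x)"
      unfolding \<Phi>_def mn using DERIV_cmult[OF d1, of K] by simp
    have ex: "exp (- (t/c1)) * exp (- (\<delta>*x)) = exp (- real m * x) * exp (- ((t - c0 * x) / c1))"
    proof -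
      have "- (t/c1) + - (\<delta>*x) = - real m * x + - ((t - c0 * x) / c1)"
        using c1 by (simp add: \<delta>_def field_simps)
      then show ?thesis by (simp add: exp_add[symmetric])
    qed
    have pw: "(real m / \<delta>) ^ Suc n * (\<delta> ^ n * \<delta>) = real m ^ Suc n"
      using \<delta>0 by (simp add: power_divide field_simps)
    have "K * ((- exp (- (\<delta>*x)) * (\<delta>*x) ^ n / fact n) * \<delta>)
        = ((real m / \<delta>) ^ Suc n * (\<delta> ^ n * \<delta>)) * x ^ n * (exp (- (t/c1)) * exp (- (\<delta>*x))) / fact n"
      unfolding K_def mn by (simp only: divide_inverse power_mult_distrib) (simp add: algebra_simps)
    also have "\<dots> = erlang_density (m - 1) (real m) x * exp (- ((t - c0 * x) / c1))"
      unfolding pw ex using x by (simp add: erlang_density_def mn field_simps)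
    finally show ?thesis using d2 by simp
  qed
  have gnn: "0 \<le> erlang_density (m - 1) (real m) x * exp (- ((t - c0 * x) / c1))" for x
    by simp
  have tc0: "0 \<le> t / c0" using t c0 by simp
  have ftc: "(\<integral>\<^sup>+x. ennreal (erlang_density (m - 1) (real m) x * exp (- ((t - c0 * x) / c1))) * indicator {0..t/c0} x \<partial>lborel)
      = ennreal (\<Phi> (t/c0) - \<Phi> 0)"
    by (rule nn_integral_FTC_Icc[where F=\<Phi>]) (use deriv\<Phi> tc0 in auto)
  have mono: "\<Phi> 0 \<le> \<Phi> (t/c0)"
    by (rule DERIV_nonneg_imp_nondecreasing[OF tc0]) (use deriv\<Phi> gnn in blast)
  have val: "\<Phi> (t/c0) - \<Phi> 0 = (b0/(b0-b1))^m * exp (- b1*t) - (b0/(b0-b1))^m * exp (- b0*t) * esum m ((b0-b1)*t)"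
  proof -
    have a1: "\<delta> * (t / c0) = (b0 - b1) * t" using c0 by (simp add: \<delta>_eq)
    have a2: "real m / \<delta> = b0 / (b0 - b1)" using m b0 ne by (simp add: \<delta>_eq c0_def field_simps)
    have a3: "t / c1 = b1 * t" by (simp add: c1_def)
    have a4: "exp (- (b1 * t)) * exp (- ((b0 - b1) * t)) = exp (- (b0 * t))"
      by (simp add: exp_add[symmetric] algebra_simps)
    have "\<Phi> (t/c0) - \<Phi> 0 = - exp (- (b1 * t)) * (b0 / (b0 - b1)) ^ m * (exp (- ((b0 - b1) * t)) * esum m ((b0 - b1) * t))
        + exp (- (b1 * t)) * (b0 / (b0 - b1)) ^ m"
      unfolding \<Phi>_def K_def a1 a2 a3 using esum_0[OF m] by simp
    also have "\<dots> = (b0/(b0-b1))^m * exp (- b1*t) - (b0/(b0-b1))^m * (exp (- (b1 * t)) * exp (- ((b0 - b1) * t))) * esum m ((b0-b1)*t)"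
      by (simp add: algebra_simps)
    also have "\<dots> = (b0/(b0-b1))^m * exp (- b1*t) - (b0/(b0-b1))^m * exp (- b0*t) * esum m ((b0-b1)*t)"
      unfolding a4 by simp
    finally show ?thesis .
  qed
  have p1nn: "0 \<le> esum m (b0*t) * exp (- b0*t)"
    using esum_def b0 t by (auto intro!: sum_nonneg mult_nonneg_nonneg simp: esum_def)
  have v0: "0 \<le> (b0/(b0-b1))^m * exp (- b1*t) - (b0/(b0-b1))^m * exp (- b0*t) * esum m ((b0-b1)*t)"
    using mono val by linarith
  have "emeasure (D0m \<Otimes>\<^sub>M D1m) A = ennreal (esum m (b0*t) * exp (- b0*t) +
      ((b0/(b0-b1))^m * exp (- b1*t) - (b0/(b0-b1))^m * exp (- b0*t) * esum m ((b0-b1)*t)))"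
    unfolding chain ftc val using p1nn v0 by (rule ennreal_plus[symmetric])
  also have "\<dots> = ennreal (Fc m b0 b1 t)" by (simp add: Fc_def add_diff_eq)
  finally have "emeasure (D0m \<Otimes>\<^sub>M D1m) A = ennreal (Fc m b0 b1 t)" .
  moreover have "{p. t < (m / b0) * fst p + (1 / b1) * snd p} = A" by (simp add: A_def c0_def c1_def)
  ultimately show ?thesis using prod p1nn v0 by (simp add: Fc_def add_diff_eq)
qed

lemma (in prob_space) indep_extract:
  fixes G0 G1 I2 :: "'a \<Rightarrow> real"
  assumes ind: "indep_vars (\<lambda>_. borel) (\<lambda>i::nat. if i = 0 then G0 else if i = 1 then G1 else I2) {0, 1, 2}"
  shows "indep_var borel G0 borel G1" and "indep_var (borel \<Otimes>\<^sub>M borel) (\<lambda>\<omega>. (I2 \<omega>, 0::real)) (borel \<Otimes>\<^sub>M borel) (\<lambda>\<omega>. (G0 \<omega>, G1 \<omega>))"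
proof -
  let ?X = "\<lambda>i::nat. if i = 0 then G0 else if i = 1 then G1 else I2"
  have r1: "indep_var (PiM {0} (\<lambda>_. borel)) (\<lambda>\<omega>. restrict (\<lambda>i. ?X i \<omega>) {0})
      (PiM {1} (\<lambda>_. borel)) (\<lambda>\<omega>. restrict (\<lambda>i. ?X i \<omega>) {1})"
    by (rule indep_var_restrict[OF ind]) auto
  have m0: "(\<lambda>f. f 0) \<in> measurable (PiM {0::nat} (\<lambda>_. borel)) (borel :: real measure)"
    by (rule measurable_component_singleton) simp
  have m1: "(\<lambda>f. f 1) \<in> measurable (PiM {1::nat} (\<lambda>_. borel)) (borel :: real measure)"
    by (rule measurable_component_singleton) simp
  show "indep_var borel G0 borel G1"
    using indep_var_compose[OF r1 m0 m1] by (simp add: comp_def)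
  have r2: "indep_var (PiM {2} (\<lambda>_. borel)) (\<lambda>\<omega>. restrict (\<lambda>i. ?X i \<omega>) {2})
      (PiM {0,1} (\<lambda>_. borel)) (\<lambda>\<omega>. restrict (\<lambda>i. ?X i \<omega>) {0,1})"
    by (rule indep_var_restrict[OF ind]) auto
  have m2: "(\<lambda>f. (f 2, 0::real)) \<in> measurable (PiM {2::nat} (\<lambda>_. borel)) (borel \<Otimes>\<^sub>M (borel :: real measure))"
    by measurable
  have m01: "(\<lambda>f. (f 0, f 1)) \<in> measurable (PiM {0::nat,1} (\<lambda>_. borel)) (borel \<Otimes>\<^sub>M (borel :: real measure))"
    by measurable
  show "indep_var (borel \<Otimes>\<^sub>M borel) (\<lambda>\<omega>. (I2 \<omega>, 0::real)) (borel \<Otimes>\<^sub>M borel) (\<lambda>\<omega>. (G0 \<omega>, G1 \<omega>))"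
    using indep_var_compose[OF r2 m2 m01] by (simp add: comp_def)
qed

lemma (in prob_space) prob_formula:
  fixes G0 G1 I2 :: "'a \<Rightarrow> real" and b0 b1 eps :: real and m :: nat
  assumes D0: "distributed M lborel G0 (\<lambda>x. ennreal (erlang_density (m - 1) (real m) x))"
    and D1: "distributed M lborel G1 (\<lambda>x. ennreal (exponential_density 1 x))"
    and ind: "indep_vars (\<lambda>_. borel) (\<lambda>i::nat. if i = 0 then G0 else if i = 1 then G1 else I2) {0, 1, 2}"
    and Ipos: "AE \<omega> in M. I2 \<omega> > 0"
    and m: "0 < m" and b0: "0 < b0" and b1: "0 < b1" and ne: "b0 \<noteq> b1" and eps: "0 < eps"
  shows "measure M {\<omega> \<in> space M. eps < (G0 \<omega> * (m / b0) + G1 \<omega> * (1 / b1)) / I2 \<omega>}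
           = (\<integral>\<omega>. Fc m b0 b1 (eps * I2 \<omega>) \<partial>M)"
    and "integrable M (\<lambda>\<omega>. Fc m b0 b1 (eps * I2 \<omega>))"
proof -
  note ind01 = indep_extract(1)[OF ind] and indp = indep_extract(2)[OF ind]
  have [measurable]: "G0 \<in> measurable M lborel" "G1 \<in> measurable M lborel"
    using D0 D1 by (auto dest: distributed_measurable)
  then have [measurable]: "G0 \<in> borel_measurable M" "G1 \<in> borel_measurable M"
    using measurable_cong_sets[OF refl sets_lborel] by auto
  have [measurable]: "I2 \<in> borel_measurable M"
    using ind unfolding indep_vars_def by (auto dest: bspec[where x=2])
  define c0 where "c0 = m / b0"
  define c1 where "c1 = 1 / b1"
  define X' where "X' \<omega> = (I2 \<omega>, 0::real)" for \<omega>
  define Y' where "Y' \<omega> = (G0 \<omega>, G1 \<omega>)" for \<omega>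
  have [measurable]: "X' \<in> borel_measurable M" "Y' \<in> measurable M (borel \<Otimes>\<^sub>M borel)" "X' \<in> measurable M (borel \<Otimes>\<^sub>M borel)"
    unfolding X'_def Y'_def by measurable
  define DX where "DX = distr M (borel \<Otimes>\<^sub>M borel) X'"
  define DY where "DY = distr M (borel \<Otimes>\<^sub>M borel) Y'"
  interpret DY: prob_space DY unfolding DY_def by (rule prob_space_distr) measurable
  have jd: "distr M ((borel \<Otimes>\<^sub>M borel) \<Otimes>\<^sub>M (borel \<Otimes>\<^sub>M borel)) (\<lambda>\<omega>. (X' \<omega>, Y' \<omega>)) = DX \<Otimes>\<^sub>M DY"
    using indp unfolding indep_var_distribution_eq DX_def DY_def X'_def Y'_def by simp
  define S where "S = {z :: (real \<times> real) \<times> (real \<times> real). eps < (fst (snd z) * c0 + snd (snd z) * c1) / fst (fst z)}"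
  have S0: "S \<in> sets ((borel \<Otimes>\<^sub>M borel) \<Otimes>\<^sub>M (borel \<Otimes>\<^sub>M borel))"
  proof -
    have "S = {z \<in> space ((borel \<Otimes>\<^sub>M borel) \<Otimes>\<^sub>M (borel \<Otimes>\<^sub>M (borel :: real measure))).
        eps < (fst (snd z) * c0 + snd (snd z) * c1) / fst (fst z)}"
      by (auto simp: S_def space_pair_measure)
    also have "\<dots> \<in> sets ((borel \<Otimes>\<^sub>M borel) \<Otimes>\<^sub>M (borel \<Otimes>\<^sub>M borel))" by measurable
    finally show ?thesis .
  qed
  have setsXY: "sets (DX \<Otimes>\<^sub>M DY) = sets ((borel \<Otimes>\<^sub>M borel) \<Otimes>\<^sub>M (borel \<Otimes>\<^sub>M borel))"
    unfolding DX_def DY_def by (intro sets_pair_measure_cong) auto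
  have S: "S \<in> sets (DX \<Otimes>\<^sub>M DY)" using S0 setsXY by simp
  have E: "{\<omega> \<in> space M. eps < (G0 \<omega> * (m / b0) + G1 \<omega> * (1 / b1)) / I2 \<omega>} = (\<lambda>\<omega>. (X' \<omega>, Y' \<omega>)) -` S \<inter> space M"
    by (auto simp: S_def X'_def Y'_def c0_def c1_def)
  have Fc_ok: "emeasure DY (Pair (X' \<omega>) -` S) = ennreal (Fc m b0 b1 (eps * I2 \<omega>)) \<and> 0 \<le> Fc m b0 b1 (eps * I2 \<omega>)
      \<and> Fc m b0 b1 (eps * I2 \<omega>) \<le> 1"
    if pos: "0 < I2 \<omega>" for \<omega>
  proof -
    have "Pair (X' \<omega>) -` S = {p. eps * I2 \<omega> < (m / b0) * fst p + (1 / b1) * snd p}"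
      using pos by (auto simp: S_def X'_def c0_def c1_def field_simps)
    moreover have "emeasure DY {p. eps * I2 \<omega> < (m / b0) * fst p + (1 / b1) * snd p} = ennreal (Fc m b0 b1 (eps * I2 \<omega>))
        \<and> 0 \<le> Fc m b0 b1 (eps * I2 \<omega>)"
      unfolding DY_def Y'_def using pos eps by (intro F_formula[OF D0 D1 ind01 m b0 b1 ne]) auto
    moreover have "emeasure DY {p. eps * I2 \<omega> < (m / b0) * fst p + (1 / b1) * snd p} \<le> 1"
      by (rule DY.emeasure_le_1)
    ultimately show ?thesis by simp
  qed
  have meas_inner: "(\<lambda>a. emeasure DY (Pair a -` S)) \<in> borel_measurable (borel \<Otimes>\<^sub>M borel)"
    using DY.measurable_emeasure_Pair[OF S] measurable_cong_sets[of DX "borel \<Otimes>\<^sub>M borel"] unfolding DX_def by simp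
  have Fm[measurable]: "(\<lambda>\<omega>. Fc m b0 b1 (eps * I2 \<omega>)) \<in> borel_measurable M"
    unfolding Fc_def esum_def by measurable
  have intF: "integrable M (\<lambda>\<omega>. Fc m b0 b1 (eps * I2 \<omega>))"
  proof (rule integrable_const_bound[where B=1])
    show "AE \<omega> in M. norm (Fc m b0 b1 (eps * I2 \<omega>)) \<le> 1"
      using Ipos by eventually_elim (use Fc_ok in auto)
  qed simp
  then show "integrable M (\<lambda>\<omega>. Fc m b0 b1 (eps * I2 \<omega>))" .
  have "AE \<omega> in M. 0 \<le> Fc m b0 b1 (eps * I2 \<omega>)"
    using Ipos by eventually_elim (use Fc_ok in auto)
  then have nn: "0 \<le> (\<integral>\<omega>. Fc m b0 b1 (eps * I2 \<omega>) \<partial>M)" by (rule integral_nonneg_AE)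
  have "emeasure M {\<omega> \<in> space M. eps < (G0 \<omega> * (m / b0) + G1 \<omega> * (1 / b1)) / I2 \<omega>}
      = emeasure (DX \<Otimes>\<^sub>M DY) S"
    unfolding E jd[symmetric] by (rule emeasure_distr[symmetric]) (use S0 in measurable)
  also have "\<dots> = (\<integral>\<^sup>+a. emeasure DY (Pair a -` S) \<partial>DX)"
    by (rule DY.emeasure_pair_measure_alt[OF S])
  also have "\<dots> = (\<integral>\<^sup>+\<omega>. emeasure DY (Pair (X' \<omega>) -` S) \<partial>M)"
    unfolding DX_def by (rule nn_integral_distr) (use meas_inner in auto)
  also have "\<dots> = (\<integral>\<^sup>+\<omega>. ennreal (Fc m b0 b1 (eps * I2 \<omega>)) \<partial>M)"
    by (rule nn_integral_cong_AE) (use Ipos Fc_ok in auto)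
  also have "\<dots> = ennreal (\<integral>\<omega>. Fc m b0 b1 (eps * I2 \<omega>) \<partial>M)"
    by (rule nn_integral_eq_integral[OF intF]) (use Ipos Fc_ok in auto)
  finally show "measure M {\<omega> \<in> space M. eps < (G0 \<omega> * (m / b0) + G1 \<omega> * (1 / b1)) / I2 \<omega>}
           = (\<integral>\<omega>. Fc m b0 b1 (eps * I2 \<omega>) \<partial>M)"
    unfolding measure_def using nn by simp
qed

lemma integral_exch:
  fixes g :: "nat \<Rightarrow> nat \<Rightarrow> 'a \<Rightarrow> real"
  assumes "\<And>j l. integrable M (g j l)" and "finite J" "\<And>j. finite (K j)"
  shows "(\<integral>\<omega>. (\<Sum>j\<in>J. \<Sum>k\<in>K j. C j k * (\<Sum>l<k. a j l * g j l \<omega>)) \<partial>M)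
       = (\<Sum>j\<in>J. \<Sum>k\<in>K j. C j k * (\<Sum>l<k. a j l * (\<integral>\<omega>. g j l \<omega> \<partial>M)))"
proof -
  have i1: "integrable M (\<lambda>\<omega>. C j k * (\<Sum>l<k. a j l * g j l \<omega>))" for j k
    using assms(1) by (intro integrable_mult_right integrable_sum) auto
  have i2: "integrable M (\<lambda>\<omega>. \<Sum>k\<in>K j. C j k * (\<Sum>l<k. a j l * g j l \<omega>))" for j
    by (rule Bochner_Integration.integrable_sum) (rule i1)
  show ?thesis
    using i1 i2 assms(1)
    by (simp add: Bochner_Integration.integral_sum integrable_sum integrable_mult_right)
qed


theorem lemma5:
  fixes M :: "'a measure"
    and G0 G1 I2 :: "'a \<Rightarrow> real"
    and lam Rc H alphaL alphaN eps r0 r1 :: real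
    and mL :: nat
  assumes "prob_space M"
    and "lam > 0" and "Rc > 0" and "H > 0" and "alphaL > 0" and "alphaN > 2"
    and "mL > 0" and "eps > 0"
    and "0 \<le> r0" and "r0 \<le> Rc" and "r1 > Rc - r0"
    and "distributed M lborel G0 (\<lambda>x. ennreal (erlang_density (mL - 1) (real mL) x))"
    and "distributed M lborel G1 (\<lambda>x. ennreal (exponential_density 1 x))"
    and "prob_space.indep_vars M (\<lambda>_. borel)
           (\<lambda>i::nat. if i = 0 then G0 else if i = 1 then G1 else I2) {0, 1, 2}"
    and "AE \<omega> in M. I2 \<omega> > 0"
  defines "b0 \<equiv> real mL * (H\<^sup>2 + r0\<^sup>2) powr (alphaL / 2)"
    and "b1 \<equiv> r1 powr alphaN"
  assumes "b0 \<noteq> b1"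
  shows "measure M {\<omega> \<in> space M.
            (G0 \<omega> * (H\<^sup>2 + r0\<^sup>2) powr (- alphaL / 2) + G1 \<omega> * r1 powr (- alphaN)) / I2 \<omega> > eps}
         = (\<Sum>j\<in>{0::nat, 1}. \<Sum>k = 1..alph mL j.
              coefA mL b0 b1 j k / bet b0 b1 j ^ k *
              (\<Sum>l<k. (- (bet b0 b1 j * eps)) ^ l / fact l *
                 (deriv ^^ l) (laplace_tr M I2) (bet b0 b1 j * eps)))"
proof -
  note M = assms(1)
  interpret prob_space M by (rule M)
  have m: "0 < mL" and eps: "0 < eps" using assms by auto
  have r1: "0 < r1" using assms by linarith
  have Hp: "0 < H\<^sup>2 + r0\<^sup>2" using assms by (simp add: add_pos_nonneg)
  have b0: "0 < b0" unfolding b0_def using m Hp by (intro mult_pos_pos) auto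
  have b1: "0 < b1" unfolding b1_def using r1 by simp
  have ne: "b0 \<noteq> b1" by fact
  have c0: "(H\<^sup>2 + r0\<^sup>2) powr (- alphaL / 2) = real mL / b0"
  proof -
    have e: "- alphaL / 2 = - (alphaL / 2)" by simp
    have P: "0 < (H\<^sup>2 + r0\<^sup>2) powr (alphaL / 2)" using Hp assms(4) by simp
    show ?thesis unfolding e powr_minus b0_def using m P by (simp add: field_simps)
  qed
  have c1: "r1 powr (- alphaN) = 1 / b1"
    unfolding b1_def powr_minus by (simp add: divide_inverse)
  have I2m: "I2 \<in> borel_measurable M"
    using assms(14) unfolding indep_vars_def by (auto dest: bspec[where x=2])
  have Ipos: "AE \<omega> in M. 0 < I2 \<omega>" using assms(15) by simp
  have bpos: "0 < bet b0 b1 j" for j using b0 b1 by (simp add: bet_def)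
  have "measure M {\<omega> \<in> space M.
            (G0 \<omega> * (H\<^sup>2 + r0\<^sup>2) powr (- alphaL / 2) + G1 \<omega> * r1 powr (- alphaN)) / I2 \<omega> > eps}
      = measure M {\<omega> \<in> space M. eps < (G0 \<omega> * (mL / b0) + G1 \<omega> * (1 / b1)) / I2 \<omega>}"
    unfolding c0 c1 by simp
  also have "\<dots> = (\<integral>\<omega>. Fc mL b0 b1 (eps * I2 \<omega>) \<partial>M)"
    by (rule prob_formula(1)[OF assms(12) assms(13) assms(14) Ipos m b0 b1 ne eps])
  also have "\<dots> = (\<integral>\<omega>. (\<Sum>j\<in>{0::nat,1}. \<Sum>k=1..alph mL j.
            coefA mL b0 b1 j k / bet b0 b1 j ^ k *
            (\<Sum>l<k. (- (bet b0 b1 j * eps)) ^ l / fact l * ((- I2 \<omega>) ^ l * exp (- (bet b0 b1 j * eps) * I2 \<omega>)))) \<partial>M)"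
    by (intro Bochner_Integration.integral_cong refl closed_form) (use m ne b0 b1 in auto)
  also have "\<dots> = (\<Sum>j\<in>{0::nat,1}. \<Sum>k=1..alph mL j.
            coefA mL b0 b1 j k / bet b0 b1 j ^ k *
            (\<Sum>l<k. (- (bet b0 b1 j * eps)) ^ l / fact l * (\<integral>\<omega>. (- I2 \<omega>) ^ l * exp (- (bet b0 b1 j * eps) * I2 \<omega>) \<partial>M)))"
    by (rule integral_exch) (use laplace_integrable[OF M I2m Ipos] bpos eps in auto)
  also have "\<dots> = (\<Sum>j\<in>{0::nat, 1}. \<Sum>k = 1..alph mL j.
              coefA mL b0 b1 j k / bet b0 b1 j ^ k *
              (\<Sum>l<k. (- (bet b0 b1 j * eps)) ^ l / fact l *
                 (deriv ^^ l) (laplace_tr M I2) (bet b0 b1 j * eps)))"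
    using laplace_deriv[OF M I2m Ipos] bpos eps by simp
  finally show ?thesis .
qed

end
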